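(* Assume the setting in the context (Condition ASM), let $\widehat\beta$ be a LASSO solution, $\widehat T=\mathrm{support}(\widehat\beta)$, $\zeta:=\max_{1\leqslant j\leqslant p}|\widehat\beta_j-\beta_{0j}|$, and $\widehat m=|\widehat T\setminus T|$. Fix $c>1$, $\bar c=(c+1)/(c-1)$. (1) If $\min_{j\in T}|\beta_{0j}|>\zeta+t$ for some $t\geqslant\zeta$, then $T\subseteq\widehat T$ and moreover $T=\{j\in\{1,\dots,p\}:|\widehat\beta_j|>t\}$. (2) If $\lambda\geqslant c\,n\|S\|_\infty$, then $$\zeta\leqslant\Big(1+\frac1c\Big)\frac{\lambda\sqrt s}{n\,\kappa_{\bar c}\,\kappa(\widehat m)}+\frac{2c_s}{\kappa(\widehat m)}.$$ (3) If $\lambda\geqslant c\,n\|S\|_\infty$ and there is a constant $U>5\bar c$ such that $|\mathbb{E}_n[x_{ij}x_{ik}]|\leqslant 1/(Us)$ for all $1\leqslant j<k\leqslant p$, then $$\zeta\leqslant\frac{\lambda}{n}\cdot\frac{U+\bar c}{U-5\bar c}+\min\Big\{\frac{\sigma}{\sqrt n},c_s\Big\}+\frac{6\bar c}{U-5\bar c}\frac{c_s}{\sqrt s}+\frac{4\bar c}{U}\frac{n}{\lambda}\frac{c_s^2}{s}.$$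
   Context: Condition ASM: observations $(y_i,z_i)$, $i=1,\dots,n$, $z_i$ fixed, $y_i=f(z_i)+\varepsilon_i$ with $\varepsilon_i$ i.i.d. $N(0,\sigma^2)$. $f_i=f(z_i)$, $\mathbb{E}_n[a_i]=n^{-1}\sum_i a_i$, $x_i=P(z_i)\in\mathbb{R}^p$ (including a constant) normalized so $\mathbb{E}_n[x_{ij}^2]=1$. $\beta_0$ is any solution of $\min_\beta\mathbb{E}_n[(f_i-x_i'\beta)^2]+\sigma^2\|\beta\|_0/n$ ($\|\cdot\|_0$ = number of nonzeros); $s=\|\beta_0\|_0$, $T=\mathrm{support}(\beta_0)$, $r_i=f_i-x_i'\beta_0$, $c_s=\sqrt{\mathbb{E}_n[r_i^2]}\leqslant K\sigma\sqrt{s/n}$ for an absolute constant $K$. $\|\delta\|_{2,n}=\sqrt{\mathbb{E}_n[(x_i'\delta)^2]}$; $S=2\mathbb{E}_n[x_i\varepsilon_i]$; LASSO: $\widehat\beta\in\arg\min_\beta\mathbb{E}_n[(y_i-x_i'\beta)^2]+\frac\lambda n\|\beta\|_1$, $\lambda>0$. $\delta_A$ is $\delta$ with entries outside $A$ set to zero. Restricted eigenvalue: $\kappa_C=\min\{\sqrt s\|\delta\|_{2,n}/\|\delta_T\|_1:\|\delta_{T^c}\|_1\leqslant C\|\delta_T\|_1,\ \delta_T\neq0\}$. Minimal sparse eigenvalue: $\kappa(m)^2=\min\{\|\delta\|_{2,n}^2/\|\delta\|^2:\delta\neq0,\|\delta_{T^c}\|_0\leqslant m\}$. *)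

theory Defs
  imports "HOL-Analysis.Analysis"
begin

definition En :: "nat \<Rightarrow> (nat \<Rightarrow> real) \<Rightarrow> real" where
  "En n a = (\<Sum>i<n. a i) / real n"

text \<open>Regressor vectors live in real^'p (p = CARD('p)).\<close>
definition supp :: "real^'p \<Rightarrow> 'p set" where
  "supp b = {j. b $ j \<noteq> 0}"

definition l0 :: "real^'p \<Rightarrow> nat" where
  "l0 b = card (supp b)"

definition l1 :: "real^'p \<Rightarrow> real" where
  "l1 b = (\<Sum>j\<in>UNIV. \<bar>b $ j\<bar>)"

definition linf :: "real^'p \<Rightarrow> real" where
  "linf b = Max (range (\<lambda>j. \<bar>b $ j\<bar>))"

definition restr :: "'p set \<Rightarrow> real^'p \<Rightarrow> real^'p" where
  "restr A d = (\<chi> j. if j \<in> A then d $ j else 0)"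

definition norm2n :: "nat \<Rightarrow> (nat \<Rightarrow> real^'p) \<Rightarrow> real^'p \<Rightarrow> real" where
  "norm2n n x d = sqrt (En n (\<lambda>i. (x i \<bullet> d)\<^sup>2))"

definition oracsol :: "nat \<Rightarrow> (nat \<Rightarrow> real^'p) \<Rightarrow> (nat \<Rightarrow> real) \<Rightarrow> real \<Rightarrow> real^'p \<Rightarrow> bool" where
  "oracsol n x f \<sigma> b0 \<longleftrightarrow>
     (\<forall>b. En n (\<lambda>i. (f i - x i \<bullet> b0)\<^sup>2) + \<sigma>\<^sup>2 * real (l0 b0) / real n
          \<le> En n (\<lambda>i. (f i - x i \<bullet> b)\<^sup>2) + \<sigma>\<^sup>2 * real (l0 b) / real n)"

definition lasso_sol :: "nat \<Rightarrow> (nat \<Rightarrow> real^'p) \<Rightarrow> (nat \<Rightarrow> real) \<Rightarrow> real \<Rightarrow> real^'p \<Rightarrow> bool" where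
  "lasso_sol n x y lam bh \<longleftrightarrow>
     (\<forall>b. En n (\<lambda>i. (y i - x i \<bullet> bh)\<^sup>2) + lam / real n * l1 bh
          \<le> En n (\<lambda>i. (y i - x i \<bullet> b)\<^sup>2) + lam / real n * l1 b)"

text \<open>Restricted eigenvalue kappa_C (the minimum is attained, so Inf = min).\<close>
definition RE :: "nat \<Rightarrow> (nat \<Rightarrow> real^'p) \<Rightarrow> 'p set \<Rightarrow> real \<Rightarrow> real" where
  "RE n x T C = Inf {sqrt (real (card T)) * norm2n n x d / l1 (restr T d) | d.
      l1 (restr (- T) d) \<le> C * l1 (restr T d) \<and> restr T d \<noteq> 0}"

definition SE :: "nat \<Rightarrow> (nat \<Rightarrow> real^'p) \<Rightarrow> 'p set \<Rightarrow> nat \<Rightarrow> real" where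
  "SE n x T m = sqrt (Inf {(norm2n n x d)\<^sup>2 / (norm d)\<^sup>2 | d.
      d \<noteq> 0 \<and> l0 (restr (- T) d) \<le> m})"

end

theory Submission
  imports Defs
begin
lemma quad_bound:
  fixes x p q :: real
  assumes h0: "x\<^sup>2 \<le> p * x + q\<^sup>2" and p0: "p \<ge> 0" and q0: "q \<ge> 0"
  shows "x \<le> p + q"
proof (rule ccontr)
  assume "\<not> ?thesis"
  hence h: "x > p + q" by simp
  have x0: "x > 0" using h p0 q0 by linarith
  have m1: "(p + q) * x < x * x" by (rule mult_strict_right_mono[OF h x0])
  have m2: "q * q \<le> q * x" by (rule mult_left_mono) (use h p0 q0 in linarith, rule q0)
  have e1: "x\<^sup>2 = x * x" by (rule power2_eq_square)
  have e2: "q\<^sup>2 = q * q" by (rule power2_eq_square)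
  have e3: "(p + q) * x = p * x + q * x" by (rule distrib_right)
  show False using h0 m1 m2 e1 e2 e3 by linarith
qed

lemma alg3:
  fixes a b q t w L u v C U :: real
  assumes w0: "w > 0" and L0: "L > 0" and v0: "v > 0" and C1: "C > 1" and U5: "U > 5 * C"
    and uC: "u = C * v" and uL: "u * (1 + C) = 2 * C * L" and vL: "v * (1 + C) = 2 * L"
    and a0: "a \<ge> 0" and b0: "b \<ge> 0" and q0: "q \<ge> 0" and t0: "t \<ge> 0"
    and h1: "q\<^sup>2 \<le> 2 * t * q + u * a - v * b"
    and h2: "a\<^sup>2 / w\<^sup>2 - (a\<^sup>2 + 2 * a * b) / (U * w\<^sup>2) \<le> q\<^sup>2"
  shows "(a + b) / (U * w\<^sup>2) \<le> L * (6 * C / (U - 5 * C)) + 6 * C / (U - 5 * C) * (t / w)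
           + 4 * C / U * (1 / L) * (t\<^sup>2 / w\<^sup>2)"
proof -
  have U0: "U > 0" using U5 C1 by simp
  have sq1: "0 \<le> (q - t)\<^sup>2" by simp
  have sq1e: "(q - t)\<^sup>2 = q\<^sup>2 - 2 * t * q + t\<^sup>2" by (simp add: power2_diff algebra_simps)
  have s1: "v * b \<le> u * a + t\<^sup>2" using h1 sq1 sq1e by linarith
  have sq2: "0 \<le> (q - 2 * t)\<^sup>2" by simp
  have sq2e: "(q - 2 * t)\<^sup>2 = q\<^sup>2 - 4 * t * q + 4 * t\<^sup>2" by (simp add: power2_diff power2_eq_square algebra_simps)
  have vb0: "v * b \<ge> 0" using v0 b0 by simp
  have s2: "q\<^sup>2 \<le> 4 * t\<^sup>2 + 2 * u * a" using h1 sq2 sq2e vb0 by linarith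
  have s3: "b \<le> C * a + t\<^sup>2 / v"
  proof -
    have "b = (v * b) / v" using v0 by simp
    also have "\<dots> \<le> (u * a + t\<^sup>2) / v" using s1 v0 by (simp add: le_divide_eq mult.commute)
    also have "\<dots> = C * a + t\<^sup>2 / v" using v0 uC by (simp add: add_divide_distrib)
    finally show ?thesis .
  qed
  define \<alpha> where "\<alpha> = a / w"
  have a_eq: "a = \<alpha> * w" using w0 by (simp add: \<alpha>_def)
  have al0: "\<alpha> \<ge> 0" using a0 w0 by (simp add: \<alpha>_def)
  define K where "K = (U - 1 - 2 * C) / U"
  have K0: "K > 0" using U5 C1 U0 by (simp add: K_def)
  have K1: "K \<le> 1" using U0 C1 by (simp add: K_def)
  define P where "P = 2 * u * w + 2 * t\<^sup>2 / (v * U * w)"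
  have u0: "u \<ge> 0" using uC v0 C1 by simp
  have P0: "P \<ge> 0" using u0 w0 v0 U0 by (simp add: P_def)
  have s4: "K * \<alpha>\<^sup>2 \<le> P * \<alpha> + 4 * t\<^sup>2"
  proof -
    have "2 * a * b \<le> 2 * a * (C * a + t\<^sup>2 / v)" using s3 a0 by (simp add: mult_left_mono)
    hence "(a\<^sup>2 + 2 * a * b) / (U * w\<^sup>2) \<le> (a\<^sup>2 + 2 * a * (C * a + t\<^sup>2 / v)) / (U * w\<^sup>2)"
      using U0 w0 by (simp add: divide_right_mono)
    hence "a\<^sup>2 / w\<^sup>2 - (a\<^sup>2 + 2 * a * (C * a + t\<^sup>2 / v)) / (U * w\<^sup>2) \<le> 4 * t\<^sup>2 + 2 * u * a"
      using h2 s2 by linarith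
    moreover have "a\<^sup>2 / w\<^sup>2 - (a\<^sup>2 + 2 * a * (C * a + t\<^sup>2 / v)) / (U * w\<^sup>2) = K * \<alpha>\<^sup>2 - 2 * \<alpha> * t\<^sup>2 / (v * U * w)"
      using w0 U0 v0 unfolding a_eq K_def by (simp add: field_simps power2_eq_square)
    moreover have "2 * u * a = 2 * u * w * \<alpha>" by (simp add: a_eq)
    ultimately have "K * \<alpha>\<^sup>2 \<le> 4 * t\<^sup>2 + 2 * u * w * \<alpha> + 2 * \<alpha> * t\<^sup>2 / (v * U * w)" by linarith
    thus ?thesis by (simp add: P_def algebra_simps add_divide_distrib)
  qed
  have s5: "\<alpha> \<le> P / K + 2 * t / K"
  proof (rule quad_bound)
    have "\<alpha>\<^sup>2 \<le> (P * \<alpha> + 4 * t\<^sup>2) / K" using s4 K0 by (simp add: field_simps)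
    also have "\<dots> = P / K * \<alpha> + 4 * t\<^sup>2 / K" by (simp add: add_divide_distrib)
    also have "4 * t\<^sup>2 / K \<le> (2 * t / K)\<^sup>2"
    proof -
      have "4 * t\<^sup>2 / K = 4 * t\<^sup>2 * K / K\<^sup>2" using K0 by (simp add: power2_eq_square)
      also have "\<dots> \<le> 4 * t\<^sup>2 * 1 / K\<^sup>2" using K1 K0 by (intro divide_right_mono mult_left_mono) auto
      finally show ?thesis by (simp add: power_divide)
    qed
    finally show "\<alpha>\<^sup>2 \<le> P / K * \<alpha> + (2 * t / K)\<^sup>2" by simp
    show "P / K \<ge> 0" using P0 K0 by simp
    show "2 * t / K \<ge> 0" using t0 K0 by simp
  qed
  have s6: "(a + b) / (U * w\<^sup>2) \<le> (1 + C) * \<alpha> / (U * w) + t\<^sup>2 / (v * U * w\<^sup>2)"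
  proof -
    have "(a + b) / (U * w\<^sup>2) \<le> ((1 + C) * a + t\<^sup>2 / v) / (U * w\<^sup>2)"
      using s3 U0 w0 by (intro divide_right_mono) (auto simp: algebra_simps)
    also have "\<dots> = (1 + C) * \<alpha> / (U * w) + t\<^sup>2 / (v * U * w\<^sup>2)"
      using w0 U0 v0 unfolding a_eq by (simp add: field_simps power2_eq_square)
    finally show ?thesis .
  qed
  have M: "U - 1 - 2 * C \<ge> U - 5 * C" using C1 by simp
  have M0: "U - 5 * C > 0" using U5 by simp
  have UK: "U * K = U - 1 - 2 * C" using U0 by (simp add: K_def)
  have "(1 + C) * \<alpha> / (U * w) \<le> (1 + C) * (P / K + 2 * t / K) / (U * w)"
    using s5 C1 U0 w0 by (intro divide_right_mono mult_left_mono) auto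
  also have "\<dots> = (1 + C) * 2 * u / (U * K) + (1 + C) * 2 * t\<^sup>2 / (v * U * w\<^sup>2 * (U * K))
        + 2 * (1 + C) * t / (w * (U * K))"
    using w0 U0 v0 K0 unfolding P_def by (simp add: field_simps power2_eq_square)
  finally have s7: "(a + b) / (U * w\<^sup>2) \<le> (1 + C) * 2 * u / (U * K) + (1 + C) * 2 * t\<^sup>2 / (v * U * w\<^sup>2 * (U * K))
        + 2 * (1 + C) * t / (w * (U * K)) + t\<^sup>2 / (v * U * w\<^sup>2)" using s6 by linarith
  have t1: "(1 + C) * 2 * u / (U * K) \<le> L * (6 * C / (U - 5 * C))"
  proof -
    have "(1 + C) * 2 * u / (U * K) = 2 * (u * (1 + C)) / (U - 1 - 2 * C)" by (simp only: UK) (simp add: algebra_simps)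
    also have "\<dots> = 4 * C * L / (U - 1 - 2 * C)" by (simp add: uL)
    also have "\<dots> \<le> 4 * C * L / (U - 5 * C)" using M M0 C1 L0 by (intro divide_left_mono) auto
    also have "\<dots> \<le> 6 * C * L / (U - 5 * C)" using M0 C1 L0 by (intro divide_right_mono) auto
    also have "\<dots> = L * (6 * C / (U - 5 * C))" by (simp add: mult_ac)
    finally show ?thesis .
  qed
  have t3: "2 * (1 + C) * t / (w * (U * K)) \<le> 6 * C / (U - 5 * C) * (t / w)"
  proof -
    have "2 * (1 + C) * t / (w * (U * K)) = (2 * (1 + C)) / (U - 1 - 2 * C) * (t / w)" using UK by simp
    also have "\<dots> \<le> (6 * C) / (U - 5 * C) * (t / w)"
      using M M0 C1 t0 w0 by (intro mult_right_mono frac_le) auto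
    finally show ?thesis .
  qed
  have t24: "(1 + C) * 2 * t\<^sup>2 / (v * U * w\<^sup>2 * (U * K)) + t\<^sup>2 / (v * U * w\<^sup>2) \<le> 4 * C / U * (1 / L) * (t\<^sup>2 / w\<^sup>2)"
  proof -
    have iv: "1 / v = (1 + C) / (2 * L)" using vL L0 v0 by (simp add: field_simps)
    have "(1 + C) * 2 * t\<^sup>2 / (v * U * w\<^sup>2 * (U * K)) + t\<^sup>2 / (v * U * w\<^sup>2)
        = ((1 + C)\<^sup>2 / (U - 1 - 2 * C) + (1 + C) / 2) * (t\<^sup>2 / (U * L * w\<^sup>2))"
    proof -
      have ve: "v = 2 * L / (1 + C)" using vL C1 by (simp add: field_simps)
      have gen: "\<And>M. M > 0 \<Longrightarrow> (1 + C) * 2 * t\<^sup>2 / (2 * L / (1 + C) * U * w\<^sup>2 * M) + t\<^sup>2 / (2 * L / (1 + C) * U * w\<^sup>2)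
        = ((1 + C)\<^sup>2 / M + (1 + C) / 2) * (t\<^sup>2 / (U * L * w\<^sup>2))"
        using U0 L0 w0 C1 by (simp add: field_simps power2_eq_square)
      show ?thesis unfolding UK ve using gen[of "U - 1 - 2 * C"] M M0 by simp
    qed
    also have "\<dots> \<le> (4 * C) * (t\<^sup>2 / (U * L * w\<^sup>2))"
    proof (rule mult_right_mono)
      have "(1 + C)\<^sup>2 \<le> 2 * C * (U - 1 - 2 * C)"
      proof -
        have "(1 + C)\<^sup>2 \<le> 2 * C * (3 * C - 1)"
        proof -
          have "(5 * C + 1) * (C - 1) \<ge> 0" using C1 by simp
          moreover have "2 * C * (3 * C - 1) - (1 + C)\<^sup>2 = (5 * C + 1) * (C - 1)"
            by (simp add: power2_eq_square algebra_simps)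
          ultimately show ?thesis by linarith
        qed
        also have "\<dots> \<le> 2 * C * (U - 1 - 2 * C)" using U5 C1 by (intro mult_left_mono) auto
        finally show ?thesis .
      qed
      hence "(1 + C)\<^sup>2 / (U - 1 - 2 * C) \<le> 2 * C" using M M0 by (simp add: divide_le_eq)
      moreover have "(1 + C) / 2 \<le> 2 * C" using C1 by simp
      ultimately show "(1 + C)\<^sup>2 / (U - 1 - 2 * C) + (1 + C) / 2 \<le> 4 * C" by (rule add_mono[THEN order_trans]) simp
      show "0 \<le> t\<^sup>2 / (U * L * w\<^sup>2)" using U0 L0 w0 by simp
    qed
    also have "\<dots> = 4 * C / U * (1 / L) * (t\<^sup>2 / w\<^sup>2)" by (simp add: field_simps)
    finally show ?thesis .
  qed
  show ?thesis using s7 t1 t3 t24 by linarith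
qed



lemma En_add: "En n (\<lambda>i. a i + b i) = En n a + En n b"
  by (simp add: En_def sum.distrib add_divide_distrib)
lemma En_diff: "En n (\<lambda>i. a i - b i) = En n a - En n b"
  by (simp add: En_def sum_subtractf diff_divide_distrib)
lemma En_cmult: "En n (\<lambda>i. c * a i) = c * En n a"
  by (simp add: En_def sum_distrib_left)
lemma En_sum: "finite A \<Longrightarrow> En n (\<lambda>i. \<Sum>j\<in>A. g j i) = (\<Sum>j\<in>A. En n (g j))"
  by (simp add: En_def sum.swap[of _ A] sum_divide_distrib)
lemma En_cong: "(\<And>i. i < n \<Longrightarrow> a i = b i) \<Longrightarrow> En n a = En n b"
  by (simp add: En_def)
lemma En_nonneg: "(\<And>i. a i \<ge> 0) \<Longrightarrow> En n a \<ge> 0"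
  by (simp add: En_def sum_nonneg)

lemma En_CS:
  assumes "n \<ge> 1"
  shows "En n (\<lambda>i. a i * b i) \<le> sqrt (En n (\<lambda>i. (a i)\<^sup>2)) * sqrt (En n (\<lambda>i. (b i)\<^sup>2))"
proof -
  have c: "(\<Sum>i<n. a i * b i)\<^sup>2 \<le> (\<Sum>i<n. (a i)\<^sup>2) * (\<Sum>i<n. (b i)\<^sup>2)"
    by (rule Cauchy_Schwarz_ineq_sum)
  have "(\<Sum>i<n. a i * b i) \<le> sqrt ((\<Sum>i<n. (a i)\<^sup>2) * (\<Sum>i<n. (b i)\<^sup>2))"
    using c real_le_rsqrt by blast
  hence "(\<Sum>i<n. a i * b i) / real n \<le> sqrt ((\<Sum>i<n. (a i)\<^sup>2) * (\<Sum>i<n. (b i)\<^sup>2)) / real n"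
    using assms by (simp add: divide_right_mono)
  also have "\<dots> = sqrt ((\<Sum>i<n. (a i)\<^sup>2) / real n) * sqrt ((\<Sum>i<n. (b i)\<^sup>2) / real n)"
    using assms by (simp add: real_sqrt_mult real_sqrt_divide)
  finally show ?thesis by (simp add: En_def)
qed

lemma En_sq_expand:
  "En n (\<lambda>i. (z i - t * w i)\<^sup>2) = En n (\<lambda>i. (z i)\<^sup>2) - 2 * t * En n (\<lambda>i. w i * z i) + t\<^sup>2 * En n (\<lambda>i. (w i)\<^sup>2)"
proof -
  have "(\<lambda>i. (z i - t * w i)\<^sup>2) = (\<lambda>i. (z i)\<^sup>2 - (2*t) * (w i * z i) + t\<^sup>2 * (w i)\<^sup>2)"
    by (rule ext) (simp add: power2_eq_square algebra_simps)
  thus ?thesis by (simp add: En_add En_diff En_cmult)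
qed

lemma inner_cart: "(u::real^'p) \<bullet> d = (\<Sum>j\<in>UNIV. u $ j * d $ j)"
  by (simp add: inner_vec_def)

lemma En_gram:
  "En n (\<lambda>i. (x i \<bullet> d) * (x i \<bullet> e)) = (\<Sum>j\<in>UNIV. \<Sum>k\<in>UNIV. d $ j * e $ k * En n (\<lambda>i. x i $ j * x i $ k))"
proof -
  have "(\<lambda>i. (x i \<bullet> d) * (x i \<bullet> e)) = (\<lambda>i. \<Sum>j\<in>UNIV. \<Sum>k\<in>UNIV. d $ j * e $ k * (x i $ j * x i $ k))"
    by (rule ext) (simp add: inner_cart sum_product algebra_simps)
  thus ?thesis by (simp add: En_sum En_cmult)
qed

lemma l1_restr: "l1 (restr A d) = (\<Sum>j\<in>A. \<bar>d $ j\<bar>)"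
proof -
  have "l1 (restr A d) = (\<Sum>j\<in>UNIV. if j \<in> A then \<bar>d $ j\<bar> else 0)"
    unfolding l1_def restr_def by (rule sum.cong) auto
  also have "\<dots> = (\<Sum>j\<in>UNIV \<inter> A. \<bar>d $ j\<bar>)"
    by (rule sum.inter_restrict[symmetric]) simp
  finally show ?thesis by simp
qed

lemma l1_split: "l1 d = l1 (restr A d) + l1 (restr (-A) d)"
proof -
  have "l1 d = (\<Sum>j\<in>A. \<bar>d $ j\<bar>) + (\<Sum>j\<in>UNIV - A. \<bar>d $ j\<bar>)"
    unfolding l1_def using sum.subset_diff[of A UNIV "\<lambda>j. \<bar>d $ j\<bar>"] by (simp add: add.commute)
  thus ?thesis by (simp add: l1_restr Compl_eq_Diff_UNIV)
qed

lemma l1_nonneg: "l1 d \<ge> 0"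
  by (simp add: l1_def sum_nonneg)


definition upd :: "real^'p \<Rightarrow> 'p \<Rightarrow> real \<Rightarrow> real^'p" where
  "upd b j t = (\<chi> k. b $ k + (if k = j then t else 0))"

lemma inner_upd: "(u::real^'p) \<bullet> upd b j t = u \<bullet> b + t * u $ j"
proof -
  have "u \<bullet> upd b j t = (\<Sum>k\<in>UNIV. u $ k * b $ k + (if k = j then t * u $ j else 0))"
    unfolding inner_cart upd_def by (rule sum.cong) (auto simp: algebra_simps)
  also have "\<dots> = u \<bullet> b + t * u $ j"
    by (simp add: sum.distrib inner_cart)
  finally show ?thesis .
qed

lemma l1_upd: "l1 (upd b j t) \<le> l1 b + \<bar>t\<bar>"
proof -
  have "l1 (upd b j t) \<le> (\<Sum>k\<in>UNIV. \<bar>b $ k\<bar> + (if k = j then \<bar>t\<bar> else 0))"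
    unfolding l1_def upd_def by (rule sum_mono) (auto simp: abs_triangle_ineq)
  also have "\<dots> = l1 b + \<bar>t\<bar>"
    by (simp add: sum.distrib l1_def)
  finally show ?thesis .
qed

lemma l0_upd: "l0 (upd b j t) \<le> l0 b + 1"
proof -
  have "supp (upd b j t) \<subseteq> insert j (supp b)"
    unfolding supp_def upd_def by auto
  hence "card (supp (upd b j t)) \<le> card (insert j (supp b))"
    by (rule card_mono[rotated]) simp
  also have "\<dots> \<le> card (supp b) + 1"
    by (simp add: card_insert_le_m1)
  finally show ?thesis by (simp add: l0_def)
qed

lemma kkt:
  assumes lasso: "lasso_sol n x y lam bh" and nj: "En n (\<lambda>i. (x i $ j)\<^sup>2) = 1"
    and n1: "n \<ge> 1" and lam: "lam > 0"
  shows "\<bar>En n (\<lambda>i. x i $ j * (y i - x i \<bullet> bh))\<bar> \<le> lam / (2 * real n)"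
proof (rule ccontr)
  define g where "g = En n (\<lambda>i. x i $ j * (y i - x i \<bullet> bh))"
  define L where "L = lam / real n"
  assume "\<not> ?thesis"
  hence gL: "\<bar>g\<bar> > L / 2" unfolding g_def L_def by simp
  define a where "a = \<bar>g\<bar> - L / 2"
  have a0: "a > 0" using gL a_def by simp
  define t where "t = sgn g * a"
  have L0: "L > 0" using lam n1 by (simp add: L_def)
  have gnz: "g \<noteq> 0" using gL L0 by auto
  have tg0: "t * g = a * (g * sgn g)" unfolding t_def by (simp only: mult_ac)
  have tg: "t * g = a * \<bar>g\<bar>" using tg0 by (metis abs_sgn)
  have sg1: "\<bar>sgn g\<bar> = 1" using gnz by (simp add: abs_sgn_eq)
  have ta: "\<bar>t\<bar> = a" using a0 sg1 unfolding t_def by (simp add: abs_mult)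
  have tsq: "t\<^sup>2 = a\<^sup>2" using ta by (metis power2_abs)
  have Qb: "En n (\<lambda>i. (y i - x i \<bullet> upd bh j t)\<^sup>2) = En n (\<lambda>i. (y i - x i \<bullet> bh)\<^sup>2) - 2 * t * g + t\<^sup>2"
  proof -
    have "(\<lambda>i. (y i - x i \<bullet> upd bh j t)\<^sup>2) = (\<lambda>i. ((y i - x i \<bullet> bh) - t * x i $ j)\<^sup>2)"
      by (simp add: inner_upd algebra_simps)
    thus ?thesis using En_sq_expand[of n "\<lambda>i. y i - x i \<bullet> bh" t "\<lambda>i. x i $ j"] nj
      by (simp add: g_def)
  qed
  have "En n (\<lambda>i. (y i - x i \<bullet> bh)\<^sup>2) + L * l1 bh \<le> En n (\<lambda>i. (y i - x i \<bullet> upd bh j t)\<^sup>2) + L * l1 (upd bh j t)"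
    using lasso unfolding lasso_sol_def L_def by simp
  also have "\<dots> \<le> En n (\<lambda>i. (y i - x i \<bullet> bh)\<^sup>2) - 2 * t * g + t\<^sup>2 + L * (l1 bh + \<bar>t\<bar>)"
  proof -
    have "L * l1 (upd bh j t) \<le> L * (l1 bh + \<bar>t\<bar>)" using l1_upd[of bh j t] L0 by (simp add: mult_left_mono)
    thus ?thesis using Qb by linarith
  qed
  finally have "0 \<le> - 2 * (t * g) + t\<^sup>2 + L * \<bar>t\<bar>" by (simp add: algebra_simps)
  hence "0 \<le> - 2 * (a * \<bar>g\<bar>) + a\<^sup>2 + L * a" using tg ta tsq by simp
  moreover have "- 2 * (a * \<bar>g\<bar>) + a\<^sup>2 + L * a = - a\<^sup>2"
    unfolding a_def by (simp add: power2_eq_square algebra_simps)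
  moreover have "a\<^sup>2 > 0" using a0 by simp
  ultimately show False by linarith
qed

lemma orac_bound:
  assumes orac: "oracsol n x f \<sigma> b0" and nj: "En n (\<lambda>i. (x i $ j)\<^sup>2) = 1" and n1: "n \<ge> 1"
  shows "(En n (\<lambda>i. x i $ j * (f i - x i \<bullet> b0)))\<^sup>2 \<le> \<sigma>\<^sup>2 / real n"
    and "(En n (\<lambda>i. x i $ j * (f i - x i \<bullet> b0)))\<^sup>2 \<le> En n (\<lambda>i. (f i - x i \<bullet> b0)\<^sup>2)"
proof -
  define g where "g = En n (\<lambda>i. x i $ j * (f i - x i \<bullet> b0))"
  define C where "C = En n (\<lambda>i. (f i - x i \<bullet> b0)\<^sup>2)"
  have Qb: "En n (\<lambda>i. (f i - x i \<bullet> upd b0 j g)\<^sup>2) = C - g\<^sup>2"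
  proof -
    have "(\<lambda>i. (f i - x i \<bullet> upd b0 j g)\<^sup>2) = (\<lambda>i. ((f i - x i \<bullet> b0) - g * x i $ j)\<^sup>2)"
      by (simp add: inner_upd algebra_simps)
    thus ?thesis using En_sq_expand[of n "\<lambda>i. f i - x i \<bullet> b0" g "\<lambda>i. x i $ j"] nj
      by (simp add: g_def C_def power2_eq_square)
  qed
  have o1: "C + \<sigma>\<^sup>2 * real (l0 b0) / real n \<le> En n (\<lambda>i. (f i - x i \<bullet> upd b0 j g)\<^sup>2) + \<sigma>\<^sup>2 * real (l0 (upd b0 j g)) / real n"
    using orac unfolding oracsol_def C_def by (rule allE)
  have "C + \<sigma>\<^sup>2 * real (l0 b0) / real n \<le> (C - g\<^sup>2) + \<sigma>\<^sup>2 * real (l0 (upd b0 j g)) / real n"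
    using o1 unfolding Qb .
  also have "\<dots> \<le> (C - g\<^sup>2) + \<sigma>\<^sup>2 * (real (l0 b0) + 1) / real n"
    using l0_upd[of b0 j g] n1
    by (intro add_left_mono divide_right_mono mult_left_mono) auto
  finally show "g\<^sup>2 \<le> \<sigma>\<^sup>2 / real n" by (simp add: algebra_simps add_divide_distrib)
  have "0 \<le> C - g\<^sup>2" using Qb[symmetric] by (simp add: En_nonneg)
  thus "g\<^sup>2 \<le> C" by simp
qed


lemma coh:
  assumes nrm: "\<forall>j. En n (\<lambda>i. (x i $ j)\<^sup>2) = 1"
    and ofd: "\<forall>j k. j \<noteq> k \<longrightarrow> \<bar>En n (\<lambda>i. x i $ j * x i $ k)\<bar> \<le> \<epsilon>"
    and e0: "\<epsilon> \<ge> 0"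
  shows "\<bar>En n (\<lambda>i. (x i \<bullet> d) * (x i \<bullet> e)) - (\<Sum>j\<in>UNIV. d $ j * e $ j)\<bar> \<le> \<epsilon> * l1 d * l1 e"
proof -
  define G' where "G' j k = En n (\<lambda>i. x i $ j * x i $ k) - (if j = k then 1 else 0)" for j k
  have G'b: "\<bar>G' j k\<bar> \<le> \<epsilon>" for j k
  proof (cases "j = k")
    case True
    have "En n (\<lambda>i. x i $ j * x i $ j) = 1" using nrm by (simp add: power2_eq_square)
    thus ?thesis using True e0 by (simp add: G'_def)
  qed (use ofd G'_def in auto)
  have diag: "(\<Sum>j\<in>UNIV. d $ j * e $ j) = (\<Sum>j\<in>UNIV. \<Sum>k\<in>UNIV. d $ j * e $ k * (if j = k then 1 else 0))"
    by (simp add: if_distrib cong: if_cong)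
  have "En n (\<lambda>i. (x i \<bullet> d) * (x i \<bullet> e)) - (\<Sum>j\<in>UNIV. d $ j * e $ j)
      = (\<Sum>j\<in>UNIV. \<Sum>k\<in>UNIV. d $ j * e $ k * G' j k)"
    unfolding En_gram diag G'_def by (simp add: sum_subtractf[symmetric] algebra_simps)
  also have "\<bar>\<dots>\<bar> \<le> (\<Sum>j\<in>UNIV. \<Sum>k\<in>UNIV. \<bar>d $ j * e $ k * G' j k\<bar>)"
    by (rule order_trans[OF sum_abs]) (intro sum_mono sum_abs)
  also have "\<dots> \<le> (\<Sum>j\<in>UNIV. \<Sum>k\<in>UNIV. \<epsilon> * (\<bar>d $ j\<bar> * \<bar>e $ k\<bar>))"
  proof (intro sum_mono)
    fix j k
    have "\<bar>d $ j * e $ k * G' j k\<bar> = (\<bar>d $ j\<bar> * \<bar>e $ k\<bar>) * \<bar>G' j k\<bar>" by (simp add: abs_mult)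
    also have "\<dots> \<le> (\<bar>d $ j\<bar> * \<bar>e $ k\<bar>) * \<epsilon>" by (rule mult_left_mono[OF G'b]) simp
    finally show "\<bar>d $ j * e $ k * G' j k\<bar> \<le> \<epsilon> * (\<bar>d $ j\<bar> * \<bar>e $ k\<bar>)" by (simp add: mult.commute)
  qed
  also have "\<dots> = \<epsilon> * (l1 d * l1 e)"
    unfolding l1_def sum_product by (simp add: sum_distrib_left)
  finally show ?thesis by (simp add: mult.assoc)
qed

lemma basic:
  assumes lasso: "lasso_sol n x y lam bh" and model: "\<forall>i<n. y i = f i + eps i"
  shows "En n (\<lambda>i. (x i \<bullet> (bh - b0))\<^sup>2) \<le> 2 * En n (\<lambda>i. (f i - x i \<bullet> b0) * (x i \<bullet> (bh - b0)))
     + (\<chi> j. 2 * En n (\<lambda>i. x i $ j * eps i)) \<bullet> (bh - b0) + lam / real n * (l1 b0 - l1 bh)"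
proof -
  define d where "d = bh - b0"
  have e1: "En n (\<lambda>i. (y i - x i \<bullet> bh)\<^sup>2) = En n (\<lambda>i. (y i - x i \<bullet> b0)\<^sup>2)
       - 2 * 1 * En n (\<lambda>i. (x i \<bullet> d) * (y i - x i \<bullet> b0)) + 1\<^sup>2 * En n (\<lambda>i. (x i \<bullet> d)\<^sup>2)"
  proof -
    have "(\<lambda>i. (y i - x i \<bullet> bh)\<^sup>2) = (\<lambda>i. ((y i - x i \<bullet> b0) - 1 * (x i \<bullet> d))\<^sup>2)"
      by (simp add: d_def inner_diff_right)
    thus ?thesis by (simp only: En_sq_expand)
  qed
  have e2: "En n (\<lambda>i. (x i \<bullet> d) * (y i - x i \<bullet> b0)) = En n (\<lambda>i. (f i - x i \<bullet> b0) * (x i \<bullet> d)) + En n (\<lambda>i. (x i \<bullet> d) * eps i)"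
  proof -
    have "En n (\<lambda>i. (x i \<bullet> d) * (y i - x i \<bullet> b0)) = En n (\<lambda>i. (f i - x i \<bullet> b0) * (x i \<bullet> d) + (x i \<bullet> d) * eps i)"
      using model by (intro En_cong) (simp add: algebra_simps)
    thus ?thesis by (simp add: En_add)
  qed
  have e3: "2 * En n (\<lambda>i. (x i \<bullet> d) * eps i) = (\<chi> j. 2 * En n (\<lambda>i. x i $ j * eps i)) \<bullet> d"
  proof -
    have "(\<lambda>i. (x i \<bullet> d) * eps i) = (\<lambda>i. \<Sum>j\<in>UNIV. d $ j * (x i $ j * eps i))"
      by (rule ext) (simp add: inner_cart sum_distrib_right sum_distrib_left algebra_simps)
    hence "En n (\<lambda>i. (x i \<bullet> d) * eps i) = (\<Sum>j\<in>UNIV. d $ j * En n (\<lambda>i. x i $ j * eps i))"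
      by (simp add: En_sum En_cmult)
    thus ?thesis by (simp add: inner_cart sum_distrib_left algebra_simps)
  qed
  have "En n (\<lambda>i. (y i - x i \<bullet> bh)\<^sup>2) + lam / real n * l1 bh \<le> En n (\<lambda>i. (y i - x i \<bullet> b0)\<^sup>2) + lam / real n * l1 b0"
    using lasso unfolding lasso_sol_def by simp
  thus ?thesis using e1 e2 e3 unfolding d_def[symmetric] by (simp add: algebra_simps)
qed

lemma inner_linf: "(S::real^'p) \<bullet> d \<le> linf S * l1 d"
proof -
  have "S \<bullet> d \<le> (\<Sum>j\<in>UNIV. \<bar>S $ j\<bar> * \<bar>d $ j\<bar>)"
    unfolding inner_cart by (rule sum_mono) (metis abs_ge_self abs_mult)
  also have "\<dots> \<le> (\<Sum>j\<in>UNIV. linf S * \<bar>d $ j\<bar>)"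
    by (rule sum_mono, rule mult_right_mono) (auto simp: linf_def)
  also have "\<dots> = linf S * l1 d" by (simp add: l1_def sum_distrib_left)
  finally show ?thesis .
qed

lemma l1_diff_bound:
  "l1 b0 - l1 bh \<le> l1 (restr (supp b0) (bh - b0)) - l1 (restr (- supp b0) (bh - b0))"
proof -
  let ?T = "supp b0"
  have "l1 b0 = l1 (restr ?T b0) + l1 (restr (-?T) b0)" by (rule l1_split)
  moreover have "l1 (restr (-?T) b0) = 0" by (simp add: l1_restr supp_def)
  moreover have "l1 bh = l1 (restr ?T bh) + l1 (restr (-?T) bh)" by (rule l1_split)
  moreover have "l1 (restr (-?T) bh) = l1 (restr (-?T) (bh - b0))"
    by (simp add: l1_restr supp_def)
  moreover have "l1 (restr ?T b0) - l1 (restr ?T bh) \<le> l1 (restr ?T (bh - b0))"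
  proof -
    have "l1 (restr ?T b0) - l1 (restr ?T bh) = (\<Sum>j\<in>?T. \<bar>b0 $ j\<bar> - \<bar>bh $ j\<bar>)"
      by (simp add: l1_restr sum_subtractf)
    also have "\<dots> \<le> (\<Sum>j\<in>?T. \<bar>bh $ j - b0 $ j\<bar>)" by (rule sum_mono) auto
    finally show ?thesis by (simp add: l1_restr)
  qed
  ultimately show ?thesis by linarith
qed

lemma l1_zero: "l1 (v::real^'p) = 0 \<Longrightarrow> v = 0"
  unfolding l1_def by (simp add: sum_nonneg_eq_0_iff vec_eq_iff)

lemma sq_restr: "(\<Sum>j\<in>UNIV. (restr A d $ j)\<^sup>2) = (\<Sum>j\<in>A. (d $ j)\<^sup>2)"
proof -
  have "(\<Sum>j\<in>UNIV. (restr A d $ j)\<^sup>2) = (\<Sum>j\<in>UNIV. if j \<in> A then (d $ j)\<^sup>2 else 0)"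
    unfolding restr_def by (rule sum.cong) auto
  also have "\<dots> = (\<Sum>j\<in>UNIV \<inter> A. (d $ j)\<^sup>2)"
    by (rule sum.inter_restrict[symmetric]) simp
  finally show ?thesis by simp
qed

lemma l1_sq_bound: "(l1 (restr A d))\<^sup>2 \<le> real (card A) * (\<Sum>j\<in>UNIV. (restr A d $ j)\<^sup>2)"
proof -
  have "(l1 (restr A d))\<^sup>2 = (\<Sum>j\<in>A. 1 * \<bar>d $ j\<bar>)\<^sup>2" by (simp add: l1_restr)
  also have "\<dots> \<le> (\<Sum>j\<in>A. 1\<^sup>2) * (\<Sum>j\<in>A. (\<bar>d $ j\<bar>)\<^sup>2)" by (rule Cauchy_Schwarz_ineq_sum)
  also have "\<dots> = real (card A) * (\<Sum>j\<in>UNIV. (restr A d $ j)\<^sup>2)" by (simp add: sq_restr)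
  finally show ?thesis .
qed

lemma abs5:
  fixes E1 E2 E3 g dj A B M D :: real
  assumes "E1 = g + E2 - E3" "\<bar>E1\<bar> \<le> A" "\<bar>E2\<bar> \<le> B" "\<bar>g\<bar> \<le> M" "\<bar>E3 - dj\<bar> \<le> D"
  shows "\<bar>dj\<bar> \<le> A + B + M + D"
  using assms by linarith

lemma lin6:
  fixes Q P R Z Sd e1 e2 t :: real
  assumes "Q = P + 2 * R + Z" "\<bar>P - Sd\<bar> \<le> e1" "\<bar>R - 0\<bar> \<le> e2" "Z \<ge> 0" "t \<le> Sd"
  shows "t - (e1 + 2 * e2) \<le> Q"
  using assms by linarith

theorem lemma3:
  fixes n :: nat and x :: "nat \<Rightarrow> real^'p" and f y eps :: "nat \<Rightarrow> real"
    and \<sigma> K lam c :: real and b0 bh :: "real^'p"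
  assumes n_pos: "n \<ge> 1" and sigma_pos: "\<sigma> > 0"
    and model: "\<forall>i<n. y i = f i + eps i"
    and const: "\<exists>j0. \<forall>i<n. x i $ j0 = 1"
    and normalized: "\<forall>j. En n (\<lambda>i. (x i $ j)\<^sup>2) = 1"
    and orac: "oracsol n x f \<sigma> b0"
    and T_ne: "supp b0 \<noteq> {}"
    and cs_bound: "sqrt (En n (\<lambda>i. (f i - x i \<bullet> b0)\<^sup>2)) \<le> K * \<sigma> * sqrt (real (l0 b0) / real n)"
    and lam_pos: "lam > 0"
    and lasso: "lasso_sol n x y lam bh"
    and c_gt: "c > 1"
  defines "T \<equiv> supp b0"
    and "s \<equiv> real (card (supp b0))"
    and "Th \<equiv> supp bh"
    and "cs \<equiv> sqrt (En n (\<lambda>i. (f i - x i \<bullet> b0)\<^sup>2))"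
    and "S \<equiv> (\<chi> j. 2 * En n (\<lambda>i. x i $ j * eps i))"
    and "\<zeta> \<equiv> Max (range (\<lambda>j. \<bar>bh $ j - b0 $ j\<bar>))"
    and "mh \<equiv> card (supp bh - supp b0)"
    and "cb \<equiv> (c + 1) / (c - 1)"
  shows
    "(\<forall>t. t \<ge> \<zeta> \<and> Min ((\<lambda>j. \<bar>b0 $ j\<bar>) ` T) > \<zeta> + t
          \<longrightarrow> T \<subseteq> Th \<and> T = {j. \<bar>bh $ j\<bar> > t})
     \<and> (lam \<ge> c * real n * linf S \<and> RE n x T cb > 0 \<and> SE n x T mh > 0
          \<longrightarrow> \<zeta> \<le> (1 + 1 / c) * lam * sqrt s / (real n * RE n x T cb * SE n x T mh)
                    + 2 * cs / SE n x T mh)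
     \<and> (\<forall>U. lam \<ge> c * real n * linf S \<and> U > 5 * cb
          \<and> (\<forall>j k. j \<noteq> k \<longrightarrow> \<bar>En n (\<lambda>i. x i $ j * x i $ k)\<bar> \<le> 1 / (U * s))
          \<longrightarrow> \<zeta> \<le> lam / real n * ((U + cb) / (U - 5 * cb))
                    + min (\<sigma> / sqrt (real n)) cs
                    + 6 * cb / (U - 5 * cb) * (cs / sqrt s)
                    + 4 * cb / U * (real n / lam) * (cs\<^sup>2 / s))"
proof -
  define d where "d = bh - b0"
  define L where "L = lam / real n"
  define a where "a = l1 (restr T d)"
  define b where "b = l1 (restr (-T) d)"
  define Q2 where "Q2 = En n (\<lambda>i. (x i \<bullet> d)\<^sup>2)"
  define q where "q = sqrt Q2"
  define u where "u = L * (1 + 1 / c)"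
  define v where "v = L * (1 - 1 / c)"
  have n0: "real n > 0" using n_pos by simp
  have L0: "L > 0" using lam_pos n0 by (simp add: L_def)
  have Q20: "Q2 \<ge> 0" unfolding Q2_def by (rule En_nonneg) simp
  have qsq: "q\<^sup>2 = Q2" unfolding q_def using Q20 by (rule real_sqrt_pow2)
  have q0: "q \<ge> 0" using Q20 by (simp add: q_def)
  have q_n2n: "norm2n n x d = q" by (simp add: norm2n_def q_def Q2_def)
  have cs0: "cs \<ge> 0" unfolding cs_def by (rule real_sqrt_ge_zero, rule En_nonneg) simp
  have a0: "a \<ge> 0" by (simp add: a_def l1_nonneg)
  have bnn: "b \<ge> 0" by (simp add: b_def l1_nonneg)
  have l1d: "l1 d = a + b" unfolding a_def b_def by (rule l1_split)
  have sT: "s = real (card T)" by (simp add: s_def T_def)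
  have "card (supp b0) > 0" using T_ne by (simp add: card_gt_0_iff)
  hence s1: "s \<ge> 1" by (simp add: s_def)
  have dcomp: "\<And>j. d $ j = bh $ j - b0 $ j" by (simp add: d_def)
  have zeta_ge: "\<bar>d $ j\<bar> \<le> \<zeta>" for j unfolding \<zeta>_def dcomp by (rule Max_ge) auto
  have "\<zeta> \<in> range (\<lambda>j. \<bar>bh $ j - b0 $ j\<bar>)" unfolding \<zeta>_def by (rule Max_in) auto
  then obtain j0 where j0: "\<zeta> = \<bar>d $ j0\<bar>" by (auto simp: dcomp)
  have zeta0: "\<zeta> \<ge> 0" using j0 by simp
  have c0: "c > 0" using c_gt by simp
  have ic: "1 / c > 0" "1 / c < 1" using c_gt by auto
  have u0: "u > 0" unfolding u_def using L0 ic by (intro mult_pos_pos) linarith+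
  have v0: "v > 0" unfolding v_def using L0 ic by (intro mult_pos_pos) linarith+
  have cnz: "c \<noteq> 0" "c - 1 \<noteq> 0" using c_gt by auto
  have uCv: "u = cb * v" unfolding u_def v_def cb_def using cnz by (simp add: field_simps)
  have CS: "En n (\<lambda>i. (f i - x i \<bullet> b0) * (x i \<bullet> d)) \<le> cs * q"
    using En_CS[OF n_pos, of "\<lambda>i. f i - x i \<bullet> b0" "\<lambda>i. x i \<bullet> d"] by (simp add: cs_def q_def Q2_def)
  have bas: "Q2 \<le> 2 * cs * q + S \<bullet> d + L * (a - b)"
  proof -
    have e: "Q2 \<le> 2 * En n (\<lambda>i. (f i - x i \<bullet> b0) * (x i \<bullet> d)) + S \<bullet> d + L * (l1 b0 - l1 bh)"
      using basic[OF lasso model, of b0] by (simp add: Q2_def S_def d_def L_def)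
    have "l1 b0 - l1 bh \<le> a - b" using l1_diff_bound[of b0 bh] by (simp add: a_def b_def T_def d_def)
    hence "L * (l1 b0 - l1 bh) \<le> L * (a - b)" using L0 by (simp add: mult_left_mono)
    thus ?thesis using e CS by linarith
  qed
  have Sj: "\<bar>S $ j\<bar> \<le> linf S" for j unfolding linf_def by (rule Max_ge) auto
  have h1gen: "q\<^sup>2 \<le> 2 * cs * q + u * a - v * b" if hl: "lam \<ge> c * real n * linf S"
  proof -
    have "linf S * (c * real n) \<le> lam" using hl by (simp add: mult_ac)
    hence "linf S \<le> lam / (c * real n)" using c0 n0 by (simp add: le_divide_eq)
    hence lS: "linf S \<le> L / c" by (simp add: L_def mult.commute)
    have "S \<bullet> d \<le> linf S * (a + b)" using inner_linf[of S d] l1d by simp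
    also have "\<dots> \<le> L / c * (a + b)" using lS a0 bnn by (intro mult_right_mono) auto
    finally have "Q2 \<le> 2 * cs * q + L / c * (a + b) + L * (a - b)" using bas by linarith
    moreover have "L / c * (a + b) + L * (a - b) = u * a - v * b"
      by (simp add: u_def v_def algebra_simps add_divide_distrib diff_divide_distrib)
    ultimately show ?thesis using qsq by linarith
  qed
  have P1: "\<forall>t. t \<ge> \<zeta> \<and> Min ((\<lambda>j. \<bar>b0 $ j\<bar>) ` T) > \<zeta> + t
          \<longrightarrow> T \<subseteq> Th \<and> T = {j. \<bar>bh $ j\<bar> > t}"
  proof (intro allI impI)
    fix t assume h: "t \<ge> \<zeta> \<and> Min ((\<lambda>j. \<bar>b0 $ j\<bar>) ` T) > \<zeta> + t"
    have inT: "\<bar>bh $ j\<bar> > t" if jT: "j \<in> T" for j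
    proof -
      have "Min ((\<lambda>j. \<bar>b0 $ j\<bar>) ` T) \<le> \<bar>b0 $ j\<bar>" using jT by (intro Min_le) auto
      moreover have "\<bar>b0 $ j\<bar> \<le> \<bar>bh $ j\<bar> + \<bar>d $ j\<bar>"
      proof -
        have "b0 $ j = bh $ j - d $ j" by (simp add: dcomp)
        thus ?thesis by (metis abs_triangle_ineq4)
      qed
      ultimately show ?thesis using h zeta_ge[of j] by linarith
    qed
    have notT: "\<bar>bh $ j\<bar> \<le> t" if jT: "j \<notin> T" for j
    proof -
      have "b0 $ j = 0" using jT by (simp add: T_def supp_def)
      hence "\<bar>bh $ j\<bar> = \<bar>d $ j\<bar>" by (simp add: dcomp)
      thus ?thesis using zeta_ge[of j] h by linarith
    qed
    have t0: "t \<ge> 0" using h zeta0 by linarith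
    show "T \<subseteq> Th \<and> T = {j. \<bar>bh $ j\<bar> > t}"
    proof
      show "T \<subseteq> Th" unfolding Th_def supp_def using inT t0 by force
      show "T = {j. \<bar>bh $ j\<bar> > t}" using inT notT by force
    qed
  qed
  have P2: "lam \<ge> c * real n * linf S \<and> RE n x T cb > 0 \<and> SE n x T mh > 0
          \<longrightarrow> \<zeta> \<le> (1 + 1 / c) * lam * sqrt s / (real n * RE n x T cb * SE n x T mh)
                    + 2 * cs / SE n x T mh"
  proof (intro impI, elim conjE)
    assume hl: "lam \<ge> c * real n * linf S" and hRE: "RE n x T cb > 0" and hSE: "SE n x T mh > 0"
    have h1: "q\<^sup>2 \<le> 2 * cs * q + u * a - v * b" using h1gen[OF hl] .
    have cbuv: "cb = u / v" using uCv v0 by simp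
    have sqs0: "sqrt s \<ge> 0" using s1 by simp
    have qb: "q \<le> 2 * cs + u * sqrt s / RE n x T cb"
    proof (cases "restr T d \<noteq> 0 \<and> v * b \<le> u * a")
      case True
      have "a \<noteq> 0" using True l1_zero[of "restr T d"] by (auto simp: a_def)
      hence apos: "a > 0" using a0 by simp
      have "b \<le> u / v * a" using True v0 by (simp add: field_simps mult.commute)
      hence bc: "l1 (restr (- T) d) \<le> cb * l1 (restr T d)" by (simp add: cbuv a_def b_def)
      have mem: "sqrt (real (card T)) * norm2n n x d / l1 (restr T d) \<in>
        {sqrt (real (card T)) * norm2n n x d / l1 (restr T d) | d.
          l1 (restr (- T) d) \<le> cb * l1 (restr T d) \<and> restr T d \<noteq> 0}"
        using bc True by blast
      have bdd: "bdd_below {sqrt (real (card T)) * norm2n n x d / l1 (restr T d) | d.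
          l1 (restr (- T) d) \<le> cb * l1 (restr T d) \<and> restr T d \<noteq> 0}"
      proof (rule bdd_belowI[of _ 0])
        fix z assume "z \<in> {sqrt (real (card T)) * norm2n n x d / l1 (restr T d) | d.
          l1 (restr (- T) d) \<le> cb * l1 (restr T d) \<and> restr T d \<noteq> 0}"
        then obtain e where "z = sqrt (real (card T)) * norm2n n x e / l1 (restr T e)" by blast
        moreover have "norm2n n x e \<ge> 0" unfolding norm2n_def by (rule real_sqrt_ge_zero, rule En_nonneg) simp
        ultimately show "0 \<le> z" by (simp add: l1_nonneg)
      qed
      have "RE n x T cb \<le> sqrt (real (card T)) * norm2n n x d / l1 (restr T d)"
        unfolding RE_def by (rule cInf_lower[OF mem bdd])
      hence "RE n x T cb \<le> sqrt s * q / a" by (simp add: sT q_n2n a_def)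
      hence "RE n x T cb * a \<le> sqrt s * q" using apos by (simp add: le_divide_eq)
      hence aRE: "a \<le> sqrt s * q / RE n x T cb" using hRE by (simp add: le_divide_eq mult.commute)
      have "v * b \<ge> 0" using v0 bnn by simp
      hence "q * q \<le> 2 * cs * q + u * a" using h1 by (simp add: power2_eq_square)
      also have "\<dots> \<le> 2 * cs * q + u * (sqrt s * q / RE n x T cb)" using mult_left_mono[OF aRE, of u] u0 by linarith
      also have "\<dots> = q * (2 * cs + u * sqrt s / RE n x T cb)" by (simp add: algebra_simps)
      finally have qq: "q * q \<le> q * (2 * cs + u * sqrt s / RE n x T cb)" .
      show ?thesis
      proof (cases "q = 0")
        case True thus ?thesis using cs0 u0 sqs0 hRE by simp
      next
        case False thus ?thesis using qq q0 by (simp add: mult_le_cancel_left)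
      qed
    next
      case False
      have "u * a - v * b \<le> 0"
      proof (cases "restr T d = 0")
        case True
        hence "a = 0" by (simp add: a_def l1_def)
        thus ?thesis using v0 bnn by simp
      next
        case False2: False
        thus ?thesis using False by auto
      qed
      hence "q * q \<le> q * (2 * cs)" using h1 by (simp add: power2_eq_square algebra_simps)
      hence "q \<le> 2 * cs"
        using q0 by (cases "q = 0") (auto simp: mult_le_cancel_left cs0)
      moreover have "u * sqrt s / RE n x T cb \<ge> 0" using u0 sqs0 hRE by simp
      ultimately show ?thesis by linarith
    qed
    have zq: "\<zeta> * SE n x T mh \<le> q"
    proof (cases "d = 0")
      case True
      thus ?thesis using j0 q0 by simp
    next
      case False
      have l0m: "l0 (restr (- T) d) \<le> mh"
      proof -
        have "supp (restr (- T) d) \<subseteq> supp bh - supp b0"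
          by (auto simp: supp_def restr_def T_def dcomp)
        hence "card (supp (restr (- T) d)) \<le> card (supp bh - supp b0)" by (rule card_mono[rotated]) simp
        thus ?thesis by (simp add: l0_def mh_def)
      qed
      let ?A = "{(norm2n n x d)\<^sup>2 / (norm d)\<^sup>2 | d. d \<noteq> 0 \<and> l0 (restr (- T) d) \<le> mh}"
      have mem: "(norm2n n x d)\<^sup>2 / (norm d)\<^sup>2 \<in> ?A" using False l0m by blast
      have bdd: "bdd_below ?A" by (rule bdd_belowI[of _ 0]) auto
      have I1: "Inf ?A \<le> q\<^sup>2 / (norm d)\<^sup>2" using cInf_lower[OF mem bdd] by (simp add: q_n2n)
      have SEd: "SE n x T mh = sqrt (Inf ?A)" by (simp add: SE_def)
      have I0: "Inf ?A > 0" using hSE SEd by simp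
      have SE2: "(SE n x T mh)\<^sup>2 = Inf ?A" using SEd I0 by simp
      have nd: "norm d > 0" using False by simp
      have "(SE n x T mh)\<^sup>2 * (norm d)\<^sup>2 \<le> q\<^sup>2" using I1 SE2 nd by (simp add: le_divide_eq)
      hence "(SE n x T mh * norm d)\<^sup>2 \<le> q\<^sup>2" by (simp add: power_mult_distrib)
      hence sn: "SE n x T mh * norm d \<le> q" using q0 by (rule power2_le_imp_le)
      have "\<zeta> \<le> norm d" using j0 component_le_norm_cart[of d j0] by simp
      hence "\<zeta> * SE n x T mh \<le> norm d * SE n x T mh" using hSE by (simp add: mult_right_mono)
      thus ?thesis using sn by (simp add: mult.commute)
    qed
    have "\<zeta> \<le> q / SE n x T mh" using zq hSE by (simp add: le_divide_eq)
    also have "\<dots> \<le> (2 * cs + u * sqrt s / RE n x T cb) / SE n x T mh"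
      using qb hSE by (simp add: divide_right_mono)
    also have "\<dots> = (1 + 1 / c) * lam * sqrt s / (real n * RE n x T cb * SE n x T mh) + 2 * cs / SE n x T mh"
      using hSE hRE n0 by (simp add: u_def L_def field_simps)
    finally show "\<zeta> \<le> (1 + 1 / c) * lam * sqrt s / (real n * RE n x T cb * SE n x T mh) + 2 * cs / SE n x T mh" .
  qed
  have P3: "\<forall>U. lam \<ge> c * real n * linf S \<and> U > 5 * cb
          \<and> (\<forall>j k. j \<noteq> k \<longrightarrow> \<bar>En n (\<lambda>i. x i $ j * x i $ k)\<bar> \<le> 1 / (U * s))
          \<longrightarrow> \<zeta> \<le> lam / real n * ((U + cb) / (U - 5 * cb))
                    + min (\<sigma> / sqrt (real n)) cs
                    + 6 * cb / (U - 5 * cb) * (cs / sqrt s)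
                    + 4 * cb / U * (real n / lam) * (cs\<^sup>2 / s)"
  proof (intro allI impI, elim conjE)
    fix U assume hl: "lam \<ge> c * real n * linf S" and hU: "U > 5 * cb"
      and hco: "\<forall>j k. j \<noteq> k \<longrightarrow> \<bar>En n (\<lambda>i. x i $ j * x i $ k)\<bar> \<le> 1 / (U * s)"
    have h1: "q\<^sup>2 \<le> 2 * cs * q + u * a - v * b" using h1gen[OF hl] .
    have cb1: "cb > 1" using c_gt by (simp add: cb_def)
    have U0: "U > 0" using hU cb1 by simp
    define \<epsilon> where "\<epsilon> = 1 / (U * s)"
    have e0: "\<epsilon> > 0" using U0 s1 by (simp add: \<epsilon>_def)
    have hco': "\<forall>j k. j \<noteq> k \<longrightarrow> \<bar>En n (\<lambda>i. x i $ j * x i $ k)\<bar> \<le> \<epsilon>" using hco by (simp add: \<epsilon>_def)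
    have "linf S * (c * real n) \<le> lam" using hl by (simp add: mult_ac)
    hence "linf S \<le> lam / (c * real n)" using c0 n0 by (simp add: le_divide_eq)
    hence lS: "linf S \<le> L / c" by (simp add: L_def mult.commute)
    have pj: "\<bar>d $ j\<bar> \<le> L / 2 + L / (2 * c) + min (\<sigma> / sqrt (real n)) cs + \<epsilon> * (a + b)" for j
    proof -
      define e :: "real^'p" where "e = upd 0 j 1"
      have xe: "\<And>i. x i \<bullet> e = x i $ j" by (simp add: e_def inner_upd)
      have l1e: "l1 e \<le> 1" using l1_upd[of 0 j 1] by (simp add: e_def l1_def)
      have de: "(\<Sum>k\<in>UNIV. e $ k * d $ k) = d $ j"
      proof -
        have "(\<Sum>k\<in>UNIV. e $ k * d $ k) = d \<bullet> e" by (simp add: inner_cart mult.commute)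
        also have "\<dots> = d $ j" by (simp add: e_def inner_upd)
        finally show ?thesis .
      qed
      have cj: "\<bar>En n (\<lambda>i. (x i \<bullet> e) * (x i \<bullet> d)) - d $ j\<bar> \<le> \<epsilon> * l1 e * l1 d"
        using coh[OF normalized hco' less_imp_le[OF e0], of e d] de by simp
      have "\<epsilon> * l1 e * l1 d \<le> \<epsilon> * 1 * l1 d"
        using l1e e0 l1_nonneg[of d] by (intro mult_right_mono mult_left_mono) auto
      hence cj2: "\<bar>En n (\<lambda>i. x i $ j * (x i \<bullet> d)) - d $ j\<bar> \<le> \<epsilon> * (a + b)"
        using cj l1d by (simp add: xe)
      have dec: "En n (\<lambda>i. x i $ j * (y i - x i \<bullet> bh)) = En n (\<lambda>i. x i $ j * (f i - x i \<bullet> b0))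
          + En n (\<lambda>i. x i $ j * eps i) - En n (\<lambda>i. x i $ j * (x i \<bullet> d))"
      proof -
        have "En n (\<lambda>i. x i $ j * (y i - x i \<bullet> bh)) = En n (\<lambda>i. x i $ j * (f i - x i \<bullet> b0)
          + x i $ j * eps i - x i $ j * (x i \<bullet> d))"
          using model by (intro En_cong) (simp add: d_def inner_diff_right algebra_simps)
        thus ?thesis by (simp add: En_add En_diff)
      qed
      have kk: "\<bar>En n (\<lambda>i. x i $ j * (y i - x i \<bullet> bh))\<bar> \<le> L / 2"
        using kkt[OF lasso _ n_pos lam_pos, of j] normalized by (simp add: L_def)
      have "\<bar>S $ j\<bar> \<le> L / c" using Sj[of j] lS by linarith
      hence sj: "\<bar>En n (\<lambda>i. x i $ j * eps i)\<bar> \<le> L / (2 * c)" by (simp add: S_def)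
      define g where "g = En n (\<lambda>i. x i $ j * (f i - x i \<bullet> b0))"
      have g1: "g\<^sup>2 \<le> \<sigma>\<^sup>2 / real n" using orac_bound(1)[OF orac _ n_pos, of j] normalized by (simp add: g_def)
      have g2: "g\<^sup>2 \<le> cs\<^sup>2" using orac_bound(2)[OF orac _ n_pos, of j] normalized cs0
        by (simp add: g_def cs_def En_nonneg)
      have "\<bar>g\<bar> \<le> sqrt (\<sigma>\<^sup>2 / real n)" using real_sqrt_le_mono[OF g1] by simp
      also have "\<dots> = \<sigma> / sqrt (real n)" using sigma_pos by (simp add: real_sqrt_divide)
      finally have ga: "\<bar>g\<bar> \<le> \<sigma> / sqrt (real n)" .
      have gb: "\<bar>g\<bar> \<le> cs" using real_sqrt_le_mono[OF g2] cs0 by simp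
      have gm: "\<bar>g\<bar> \<le> min (\<sigma> / sqrt (real n)) cs" using ga gb by simp
      show ?thesis using abs5[OF dec[folded g_def] kk sj gm cj2] .
    qed
    have lb: "a\<^sup>2 / s - (a\<^sup>2 + 2 * a * b) / (U * s) \<le> q\<^sup>2"
    proof -
      define dT where "dT = restr T d"
      define dC where "dC = restr (-T) d"
      have ddec: "d = dT + dC" by (simp add: dT_def dC_def restr_def vec_eq_iff)
      have Qdec: "Q2 = En n (\<lambda>i. (x i \<bullet> dT) * (x i \<bullet> dT)) + 2 * En n (\<lambda>i. (x i \<bullet> dT) * (x i \<bullet> dC))
           + En n (\<lambda>i. (x i \<bullet> dC)\<^sup>2)"
      proof -
        have "(\<lambda>i. (x i \<bullet> d)\<^sup>2) = (\<lambda>i. (x i \<bullet> dT) * (x i \<bullet> dT) + 2 * ((x i \<bullet> dT) * (x i \<bullet> dC)) + (x i \<bullet> dC)\<^sup>2)"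
          by (rule ext) (simp add: ddec inner_add_right power2_eq_square algebra_simps)
        thus ?thesis by (simp add: Q2_def En_add En_cmult)
      qed
      have c1: "\<bar>En n (\<lambda>i. (x i \<bullet> dT) * (x i \<bullet> dT)) - (\<Sum>j\<in>UNIV. dT $ j * dT $ j)\<bar> \<le> \<epsilon> * a * a"
        using coh[OF normalized hco' less_imp_le[OF e0], of dT dT] by (simp add: a_def dT_def)
      have c2: "\<bar>En n (\<lambda>i. (x i \<bullet> dT) * (x i \<bullet> dC)) - (\<Sum>j\<in>UNIV. dT $ j * dC $ j)\<bar> \<le> \<epsilon> * a * b"
        using coh[OF normalized hco' less_imp_le[OF e0], of dT dC] by (simp add: a_def b_def dT_def dC_def)
      have z: "(\<Sum>j\<in>UNIV. dT $ j * dC $ j) = 0" unfolding dT_def dC_def restr_def by (intro sum.neutral) auto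
      have c3: "En n (\<lambda>i. (x i \<bullet> dC)\<^sup>2) \<ge> 0" by (rule En_nonneg) simp
      have sq: "a\<^sup>2 \<le> s * (\<Sum>j\<in>UNIV. dT $ j * dT $ j)"
        using l1_sq_bound[of T d] by (simp add: a_def dT_def sT power2_eq_square)
      hence sq2: "a\<^sup>2 / s \<le> (\<Sum>j\<in>UNIV. dT $ j * dT $ j)" using s1 by (simp add: divide_le_eq mult.commute)
      have "(a\<^sup>2 + 2 * a * b) / (U * s) = \<epsilon> * a * a + 2 * (\<epsilon> * a * b)"
        by (simp add: \<epsilon>_def power2_eq_square add_divide_distrib)
      moreover have "q\<^sup>2 = Q2" by (rule qsq)
      ultimately show ?thesis using lin6[OF Qdec c1 c2[unfolded z] c3 sq2] by simp
    qed
    have w0: "sqrt s > 0" using s1 by simp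
    have ws: "(sqrt s)\<^sup>2 = s" using s1 by simp
    have uL: "u * (1 + cb) = 2 * cb * L" unfolding u_def cb_def using cnz by (simp add: field_simps)
    have vL: "v * (1 + cb) = 2 * L" unfolding v_def cb_def using cnz by (simp add: field_simps)
    have lb': "a\<^sup>2 / (sqrt s)\<^sup>2 - (a\<^sup>2 + 2 * a * b) / (U * (sqrt s)\<^sup>2) \<le> q\<^sup>2" using lb ws by simp
    have A3: "(a + b) / (U * (sqrt s)\<^sup>2) \<le> L * (6 * cb / (U - 5 * cb)) + 6 * cb / (U - 5 * cb) * (cs / sqrt s)
           + 4 * cb / U * (1 / L) * (cs\<^sup>2 / (sqrt s)\<^sup>2)"
      by (rule alg3[OF w0 L0 v0 cb1 hU uCv uL vL a0 bnn q0 cs0 h1 lb'])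
    hence A3': "\<epsilon> * (a + b) \<le> L * (6 * cb / (U - 5 * cb)) + 6 * cb / (U - 5 * cb) * (cs / sqrt s)
           + 4 * cb / U * (real n / lam) * (cs\<^sup>2 / s)"
      using ws by (simp add: \<epsilon>_def L_def)
    have Lc: "L / 2 + L / (2 * c) \<le> L"
    proof -
      have "L / c \<le> L" using L0 c_gt by (simp add: divide_le_eq)
      thus ?thesis by simp
    qed
    have U5: "U - 5 * cb \<noteq> 0" using hU by simp
    have eqL: "lam / real n * ((U + cb) / (U - 5 * cb)) = L + L * (6 * cb / (U - 5 * cb))"
    proof -
      have "U + cb = (U - 5 * cb) + 6 * cb" by simp
      hence "(U + cb) / (U - 5 * cb) = (U - 5 * cb) / (U - 5 * cb) + 6 * cb / (U - 5 * cb)"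
        by (simp only: add_divide_distrib)
      also have "\<dots> = 1 + 6 * cb / (U - 5 * cb)" using U5 by simp
      finally show ?thesis by (simp add: L_def distrib_left)
    qed
    show "\<zeta> \<le> lam / real n * ((U + cb) / (U - 5 * cb)) + min (\<sigma> / sqrt (real n)) cs
          + 6 * cb / (U - 5 * cb) * (cs / sqrt s) + 4 * cb / U * (real n / lam) * (cs\<^sup>2 / s)"
      using pj[of j0] j0 A3' Lc eqL by linarith
  qed
  show ?thesis using P1 P2 P3 by blast
qed

end
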